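(* Let $\pi$ be a probability density on $(\mathbb{R}^{n})^t$, $t\ge1$, and let $q'(\cdot|\cdot)$ be a symmetric transition density on $\mathbb{R}^n$, i.e. $q'(a|b)=q'(b|a)$ for all $a,b$. Define a Markov transition kernel on $(\mathbb{R}^n)^t$ as follows: from the current state $x_{1:t}$, draw $\tilde x_{1:t}$ from $q(\tilde x_{1:t}|x_{1:t})=\prod_{j=1}^t q'(\tilde x_j|x_j)$; then set the next state $y_{1:t}$ to $\Gamma_{p,t}(x_{1:t})$ with probability $\beta_p/S$ or to $\Gamma_{p,t}(\tilde x_{1:t})$ with probability $\tilde\beta_p/S$, for $p=1,\dots,t!$, where $\beta_p=\pi(\Gamma_{p,t}(x_{1:t}))$, $\tilde\beta_p=\pi(\Gamma_{p,t}(\tilde x_{1:t}))$ and $S=\sum_{p=1}^{t!}(\beta_p+\tilde\beta_p)$. Then this kernel satisfies detailed balance with respect to $\pi$, and hence $\pi$ is an invariant density of the kernel.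
   Context: $\Gamma_{p,t}$, $p=1,\dots,t!$, enumerates the permutations acting on the $t$ components of a vector $x_{1:t}=(x_1,\dots,x_t)\in(\mathbb{R}^n)^t$. The current state $x_{1:t}$ is assumed to satisfy $\pi(x_{1:t})>0$ so that $S>0$. *)

theory Defs
  imports "HOL-Analysis.Analysis" "HOL-Combinatorics.Permutations"
begin

text \<open>States are x_{1:t} in (R^n)^t, modelled as real^'n^'t: the index type 't has
  t elements, component j is x $ j :: real^'n.\<close>

text \<open>The permutations Gamma_{p,t}, p = 1..t!, acting on the t components:
  they are exactly the maps perm_apply sigma with sigma a permutation of the index set.\<close>
definition perm_apply :: "('t::finite \<Rightarrow> 't) \<Rightarrow> real^'n^'t \<Rightarrow> real^'n^'t" where
  "perm_apply \<sigma> x = (\<chi> j. x $ \<sigma> j)"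

definition perms :: "('t::finite \<Rightarrow> 't) set" where
  "perms = {\<sigma>. \<sigma> permutes (UNIV :: 't set)}"

text \<open>Product proposal q(xt | x) = prod_j q'(xt_j | x_j); q' a b denotes q'(a|b).\<close>
definition prop_q :: "(real^'n \<Rightarrow> real^'n \<Rightarrow> real) \<Rightarrow> real^'n^'t \<Rightarrow> real^'n^'t \<Rightarrow> real" where
  "prop_q q' x xt = (\<Prod>j\<in>UNIV. q' (xt $ j) (x $ j))"

definition norm_S :: "(real^'n^'t \<Rightarrow> real) \<Rightarrow> real^'n^'t \<Rightarrow> real^'n^'t \<Rightarrow> real" where
  "norm_S \<pi> x xt = (\<Sum>\<sigma>\<in>perms. \<pi> (perm_apply \<sigma> x) + \<pi> (perm_apply \<sigma> xt))"

text \<open>The Markov kernel K, given by its action on nonnegative test functions g: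
  (K g)(x) = int q(xt|x) sum_p [ beta_p/S g(Gamma_p x) + betat_p/S g(Gamma_p xt) ] dxt.\<close>
definition kernel_op ::
  "(real^'n^'t \<Rightarrow> real) \<Rightarrow> (real^'n \<Rightarrow> real^'n \<Rightarrow> real) \<Rightarrow> real^'n^'t
     \<Rightarrow> (real^'n^'t \<Rightarrow> ennreal) \<Rightarrow> ennreal" where
  "kernel_op \<pi> q' x g =
     (\<integral>\<^sup>+ xt. ennreal (prop_q q' x xt) *
        (\<Sum>\<sigma>\<in>perms.
            ennreal (\<pi> (perm_apply \<sigma> x) / norm_S \<pi> x xt) * g (perm_apply \<sigma> x)
          + ennreal (\<pi> (perm_apply \<sigma> xt) / norm_S \<pi> x xt) * g (perm_apply \<sigma> xt)) \<partial>lborel)"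

end

theory Submission
  imports Defs
begin

lemma mem_box_vec: "(x::'a::euclidean_space^'t::finite) \<in> box l u \<longleftrightarrow> (\<forall>i. x$i \<in> box (l$i) (u$i))"
  by (auto simp: mem_box Basis_vec_def inner_axis)
lemma prod_Basis_vec: "(\<Prod>b\<in>(Basis::('a::euclidean_space^'t::finite) set). F b) = (\<Prod>i\<in>UNIV. \<Prod>u\<in>Basis. F (axis i u))"
  unfolding Basis_vec_def
  apply (subst prod.UNION_disjoint)
  apply (auto simp: axis_eq_axis)
  apply (rule prod.cong, simp)
  apply (subst prod.UNION_disjoint)
  apply (auto simp: axis_eq_axis)
  done

lemma perm_apply_cont: "continuous_on UNIV (perm_apply \<sigma>)"
  unfolding perm_apply_def by (intro continuous_intros)

lemma perm_apply_meas[measurable]: "perm_apply \<sigma> \<in> borel_measurable borel"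
  by (rule borel_measurable_continuous_onI[OF perm_apply_cont])

lemma perm_apply_comp: "perm_apply \<tau> (perm_apply \<sigma> x) = perm_apply (\<sigma> \<circ> \<tau>) x"
  by (simp add: perm_apply_def)

lemma perm_apply_id: "perm_apply id x = x"
  by (simp add: perm_apply_def)

lemma lborel_perm:
  assumes s: "\<sigma> permutes (UNIV::'t::finite set)"
  shows "(lborel :: (real^'n^'t) measure) = distr lborel borel (perm_apply \<sigma>)"
proof (rule lborel_eqI)
  fix l u :: "real^'n^'t"
  assume le: "\<And>b. b \<in> Basis \<Longrightarrow> l \<bullet> b \<le> u \<bullet> b"
  define \<tau> where "\<tau> = inv \<sigma>"
  have st: "\<sigma> (\<tau> i) = i" for i using s unfolding \<tau>_def by (simp add: permutes_inverses)
  have ts: "\<tau> (\<sigma> i) = i" for i using s unfolding \<tau>_def by (simp add: permutes_inverses)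
  have pre: "perm_apply \<sigma> -` box l u = box (perm_apply \<tau> l) (perm_apply \<tau> u)"
  proof (rule set_eqI)
    fix x
    have "(\<forall>i. x $ \<sigma> i \<in> box (l $ i) (u $ i)) \<longleftrightarrow> (\<forall>i. x $ i \<in> box (l $ \<tau> i) (u $ \<tau> i))"
      by (metis st ts)
    then show "x \<in> perm_apply \<sigma> -` box l u \<longleftrightarrow> x \<in> box (perm_apply \<tau> l) (perm_apply \<tau> u)"
      by (simp add: mem_box_vec perm_apply_def)
  qed
  have le': "perm_apply \<tau> l \<bullet> b \<le> perm_apply \<tau> u \<bullet> b" if "b \<in> Basis" for b
  proof -
    from that obtain i v where b: "b = axis i v" "v \<in> Basis" unfolding Basis_vec_def by auto
    have "l \<bullet> axis (\<tau> i) v \<le> u \<bullet> axis (\<tau> i) v" using le b by simp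
    then show ?thesis using b by (simp add: inner_axis perm_apply_def)
  qed
  have "emeasure (distr lborel borel (perm_apply \<sigma>)) (box l u)
      = emeasure lborel (box (perm_apply \<tau> l) (perm_apply \<tau> u))"
    by (simp add: emeasure_distr pre)
  also have "\<dots> = ennreal (\<Prod>b\<in>Basis. (perm_apply \<tau> u - perm_apply \<tau> l) \<bullet> b)"
    using le' by (simp add: emeasure_lborel_box_eq)
  also have "(\<Prod>b\<in>Basis. (perm_apply \<tau> u - perm_apply \<tau> l) \<bullet> b)
      = (\<Prod>i\<in>UNIV. \<Prod>v\<in>Basis. (u $ \<tau> i - l $ \<tau> i) \<bullet> v)"
    by (simp add: prod_Basis_vec inner_axis perm_apply_def)
  also have "\<dots> = (\<Prod>i\<in>UNIV. \<Prod>v\<in>Basis. (u $ i - l $ i) \<bullet> v)"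
    using prod.permute[of "inv \<sigma>" UNIV "\<lambda>i. \<Prod>v\<in>Basis. (u $ i - l $ i) \<bullet> v"]
      permutes_inv[OF s] unfolding \<tau>_def by (simp add: comp_def)
  also have "\<dots> = (\<Prod>b\<in>Basis. (u - l) \<bullet> b)"
    by (simp add: prod_Basis_vec inner_axis)
  finally show "emeasure (distr lborel borel (perm_apply \<sigma>)) (box l u) = (\<Prod>b\<in>Basis. (u - l) \<bullet> b)" .
qed simp
lemma vec_nth_meas[measurable]: "(\<lambda>x::'a::real_normed_vector^'t::finite. x $ j) \<in> borel_measurable borel"
  by (rule borel_measurable_continuous_onI) (intro continuous_intros)

lemma vec_meas: "(\<lambda>F. \<chi> j. F j) \<in> borel_measurable (PiM (UNIV::'t::finite set) (\<lambda>_. (lborel::'a::euclidean_space measure)))"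
proof -
  have "(\<lambda>F. (\<chi> j. F j) \<bullet> b) \<in> borel_measurable (PiM (UNIV::'t set) (\<lambda>_. (lborel::'a measure)))"
    if "b \<in> Basis" for b
  proof -
    from that obtain i v where b: "b = axis i v" "v \<in> Basis" unfolding Basis_vec_def by auto
    have "(\<lambda>F. F i \<bullet> v) \<in> borel_measurable (PiM (UNIV::'t set) (\<lambda>_. (lborel::'a measure)))"
      by measurable
    then show ?thesis using b by (simp add: inner_axis)
  qed
  then show ?thesis by (subst borel_measurable_euclidean_space) auto
qed

lemma lborel_vec:
  "(lborel :: ('a::euclidean_space^'t::finite) measure) = distr (PiM UNIV (\<lambda>_. lborel)) borel (\<lambda>F. \<chi> j. F j)"
proof (rule lborel_eqI)
  interpret product_sigma_finite "\<lambda>_::'t. (lborel::'a measure)" by standard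
  fix l u :: "'a^'t"
  assume le: "\<And>b. b \<in> Basis \<Longrightarrow> l \<bullet> b \<le> u \<bullet> b"
  have le': "l $ i \<bullet> v \<le> u $ i \<bullet> v" if "v \<in> Basis" for i v
    using le[of "axis i v"] that by (simp add: inner_axis)
  have pre: "(\<lambda>F. \<chi> j. F j) -` box l u \<inter> space (PiM UNIV (\<lambda>_::'t. (lborel::'a measure)))
      = Pi\<^sub>E UNIV (\<lambda>j. box (l $ j) (u $ j))"
    by (auto simp: mem_box_vec space_PiM PiE_def Pi_def extensional_def)
  have "emeasure (distr (PiM UNIV (\<lambda>_. lborel)) borel (\<lambda>F. \<chi> j. F j)) (box l u)
      = emeasure (PiM UNIV (\<lambda>_. lborel)) (Pi\<^sub>E UNIV (\<lambda>j. box (l $ j) (u $ j)))"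
    by (subst emeasure_distr[OF vec_meas]) (simp_all add: pre)
  also have "\<dots> = (\<Prod>j\<in>UNIV. emeasure lborel (box (l $ j) (u $ j)))"
    by (rule emeasure_PiM) auto
  also have "\<dots> = (\<Prod>j\<in>UNIV. ennreal (\<Prod>v\<in>Basis. (u $ j - l $ j) \<bullet> v))"
    using le' by (simp add: emeasure_lborel_box_eq)
  also have "\<dots> = ennreal (\<Prod>j\<in>UNIV. \<Prod>v\<in>Basis. (u $ j - l $ j) \<bullet> v)"
    using le' by (subst prod_ennreal) (auto intro!: prod_nonneg simp: inner_diff_left)
  also have "\<dots> = ennreal (\<Prod>b\<in>Basis. (u - l) \<bullet> b)"
    by (simp add: prod_Basis_vec inner_axis)
  finally show "emeasure (distr (PiM UNIV (\<lambda>_. lborel)) borel (\<lambda>F. \<chi> j. F j)) (box l u) = (\<Prod>b\<in>Basis. (u - l) \<bullet> b)" .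
qed simp

lemma nn_integral_vec_prod:
  fixes h :: "'t::finite \<Rightarrow> 'a::euclidean_space \<Rightarrow> ennreal"
  assumes [measurable]: "\<And>j. h j \<in> borel_measurable borel"
  shows "(\<integral>\<^sup>+ x. (\<Prod>j\<in>UNIV. h j (x $ j)) \<partial>(lborel::('a^'t) measure)) = (\<Prod>j\<in>UNIV. \<integral>\<^sup>+ y. h j y \<partial>lborel)"
proof -
  interpret product_sigma_finite "\<lambda>_::'t. (lborel::'a measure)" by standard
  have "(\<integral>\<^sup>+ x. (\<Prod>j\<in>UNIV. h j (x $ j)) \<partial>(lborel::('a^'t) measure))
     = (\<integral>\<^sup>+ F. (\<Prod>j\<in>UNIV. h j ((\<chi> j. F j) $ j)) \<partial>(PiM UNIV (\<lambda>_. lborel)))"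
    apply (subst lborel_vec)
    apply (subst nn_integral_distr)
    using vec_meas apply simp
     apply measurable
    done
  also have "\<dots> = (\<integral>\<^sup>+ F. (\<Prod>j\<in>UNIV. h j (F j)) \<partial>(PiM UNIV (\<lambda>_. lborel)))"
    by simp
  also have "\<dots> = (\<Prod>j\<in>UNIV. \<integral>\<^sup>+ y. h j y \<partial>lborel)"
    by (rule product_nn_integral_prod) auto
  finally show ?thesis .
qed

lemma prop_q_meas[measurable]:
  assumes q: "(\<lambda>(a, b). q' a b) \<in> borel_measurable borel"
    and [measurable]: "f \<in> borel_measurable M" "g \<in> borel_measurable M"
  shows "(\<lambda>z. prop_q q' (f z) (g z)) \<in> borel_measurable M"
proof -
  have "(\<lambda>z. q' (g z $ j) (f z $ j)) \<in> borel_measurable M" for j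
  proof -
    have "(\<lambda>z. (g z $ j, f z $ j)) \<in> measurable M borel"
      unfolding borel_prod[symmetric] by measurable
    from measurable_compose[OF this q] show ?thesis by simp
  qed
  then show ?thesis unfolding prop_q_def by measurable
qed

lemma norm_S_meas[measurable]:
  assumes [measurable]: "\<pi> \<in> borel_measurable borel" "f \<in> borel_measurable M" "g \<in> borel_measurable M"
  shows "(\<lambda>z. norm_S \<pi> (f z) (g z)) \<in> borel_measurable M"
  unfolding norm_S_def by measurable

lemma pair_perm_inv:
  fixes h :: "(real^'n^'t::finite) \<times> (real^'n^'t) \<Rightarrow> ennreal"
  assumes s: "\<sigma> permutes (UNIV::'t set)" and h: "h \<in> borel_measurable (lborel \<Otimes>\<^sub>M lborel)"
  shows "(\<integral>\<^sup>+ z. h (perm_apply \<sigma> (fst z), perm_apply \<sigma> (snd z)) \<partial>(lborel \<Otimes>\<^sub>M lborel)) = (\<integral>\<^sup>+ z. h z \<partial>(lborel \<Otimes>\<^sub>M lborel))"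
proof -
  have e: "distr lborel borel (perm_apply \<sigma>) = (lborel :: (real^'n^'t) measure)"
    using lborel_perm[OF s] by (rule sym)
  have D: "(lborel \<Otimes>\<^sub>M lborel :: ((real^'n^'t) \<times> (real^'n^'t)) measure)
      = distr (lborel \<Otimes>\<^sub>M lborel) (borel \<Otimes>\<^sub>M borel) (\<lambda>(x, y). (perm_apply \<sigma> x, perm_apply \<sigma> y))"
    using pair_measure_distr[of "perm_apply \<sigma>" "lborel :: (real^'n^'t) measure" borel "perm_apply \<sigma>" "lborel :: (real^'n^'t) measure" borel]
    by (simp add: e sigma_finite_lborel)
  have hb: "h \<in> borel_measurable (borel \<Otimes>\<^sub>M borel)"
    using h measurable_cong_sets[OF sets_pair_measure_cong[OF sets_lborel sets_lborel] refl] by blast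
  have "(\<integral>\<^sup>+ z. h z \<partial>(lborel \<Otimes>\<^sub>M lborel)) = (\<integral>\<^sup>+ z. h z \<partial>(distr (lborel \<Otimes>\<^sub>M lborel) (borel \<Otimes>\<^sub>M borel) (\<lambda>(x, y). (perm_apply \<sigma> x, perm_apply \<sigma> y))))"
    by (rule arg_cong[where f="\<lambda>M. integral\<^sup>N M h"], rule D)
  also have "\<dots> = (\<integral>\<^sup>+ z. h ((\<lambda>(x, y). (perm_apply \<sigma> x, perm_apply \<sigma> y)) z) \<partial>(lborel \<Otimes>\<^sub>M lborel))"
    by (rule nn_integral_distr) (measurable, rule hb)
  finally show ?thesis by (simp add: case_prod_beta)
qed

lemma pair_swap_inv:
  fixes h :: "(real^'n^'t::finite) \<times> (real^'n^'t) \<Rightarrow> ennreal"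
  assumes h: "h \<in> borel_measurable (lborel \<Otimes>\<^sub>M lborel)"
  shows "(\<integral>\<^sup>+ z. h (snd z, fst z) \<partial>(lborel \<Otimes>\<^sub>M lborel)) = (\<integral>\<^sup>+ z. h z \<partial>(lborel \<Otimes>\<^sub>M lborel))"
proof -
  have "(\<integral>\<^sup>+ z. h z \<partial>(lborel \<Otimes>\<^sub>M lborel)) = (\<integral>\<^sup>+ z. h z \<partial>(distr (lborel \<Otimes>\<^sub>M lborel) (lborel \<Otimes>\<^sub>M lborel) (\<lambda>(x, y). (y, x))))"
    by (rule arg_cong[where f="\<lambda>M. integral\<^sup>N M h"], rule lborel_pair.distr_pair_swap)
  also have "\<dots> = (\<integral>\<^sup>+ z. h ((\<lambda>(x, y). (y, x)) z) \<partial>(lborel \<Otimes>\<^sub>M lborel))"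
    by (rule nn_integral_distr, rule measurable_pair_swap', simp add: h)
  finally show ?thesis by (simp add: case_prod_beta)
qed

lemma iter_pair:
  fixes H :: "real^'n^'t::finite \<Rightarrow> real^'n^'t \<Rightarrow> ennreal" and \<pi> :: "real^'n^'t \<Rightarrow> real"
  assumes [measurable]: "\<pi> \<in> borel_measurable borel"
    and H[measurable]: "(\<lambda>z. H (fst z) (snd z)) \<in> borel_measurable (lborel \<Otimes>\<^sub>M lborel)"
  shows "(\<integral>\<^sup>+ x. ennreal (\<pi> x) * (\<integral>\<^sup>+ xt. H x xt \<partial>lborel) \<partial>lborel)
       = (\<integral>\<^sup>+ z. ennreal (\<pi> (fst z)) * H (fst z) (snd z) \<partial>(lborel \<Otimes>\<^sub>M lborel))"
proof -
  have Hx: "(\<lambda>xt. H x xt) \<in> borel_measurable lborel" for x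
    using measurable_compose_Pair1[of x lborel "\<lambda>z. H (fst z) (snd z)" lborel borel] H by simp
  have "(\<integral>\<^sup>+ x. ennreal (\<pi> x) * (\<integral>\<^sup>+ xt. H x xt \<partial>lborel) \<partial>lborel)
      = (\<integral>\<^sup>+ x. (\<integral>\<^sup>+ xt. ennreal (\<pi> x) * H x xt \<partial>lborel) \<partial>lborel)"
    by (rule nn_integral_cong) (simp add: nn_integral_cmult[OF Hx])
  also have "\<dots> = (\<integral>\<^sup>+ z. ennreal (\<pi> (fst z)) * H (fst z) (snd z) \<partial>(lborel \<Otimes>\<^sub>M lborel))"
    using lborel.nn_integral_fst[of "\<lambda>z. ennreal (\<pi> (fst z)) * H (fst z) (snd z)" lborel] by simp
  finally show ?thesis .
qed

lemma perms_inv_sum: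
  "(\<Sum>\<sigma>\<in>perms. F (inv \<sigma>)) = (\<Sum>\<sigma>\<in>(perms :: ('t::finite \<Rightarrow> 't) set). F \<sigma>)"
  by (rule sum.reindex_bij_witness[where i=inv and j=inv])
     (auto simp: perms_def permutes_inv_inv permutes_inv)

lemma prop_q_perm:
  assumes s: "\<sigma> permutes (UNIV::'t::finite set)"
  shows "prop_q q' (perm_apply \<sigma> x) (perm_apply \<sigma> xt) = prop_q q' (x::real^'n^'t) xt"
  unfolding prop_q_def perm_apply_def
  using prod.permute[OF s, of "\<lambda>j. q' (xt $ j) (x $ j)"] by (simp add: comp_def)

lemma prop_q_swap:
  assumes "\<And>a b. q' a b = q' b a"
  shows "prop_q q' xt x = prop_q q' x xt"
  unfolding prop_q_def using assms by simp

lemma norm_S_swap: "norm_S \<pi> xt x = norm_S \<pi> x xt"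
  unfolding norm_S_def by (simp add: add.commute)

lemma norm_S_perm:
  assumes s: "\<sigma> \<in> perms"
  shows "norm_S \<pi> (perm_apply \<sigma> x) (perm_apply \<sigma> xt) = norm_S \<pi> (x::real^'n^'t::finite) xt"
proof -
  have s': "\<sigma> permutes UNIV" using s by (simp add: perms_def)
  have "norm_S \<pi> (perm_apply \<sigma> x) (perm_apply \<sigma> xt) = (\<Sum>\<tau>\<in>perms. \<pi> (perm_apply (\<sigma> \<circ> \<tau>) x) + \<pi> (perm_apply (\<sigma> \<circ> \<tau>) xt))"
    unfolding norm_S_def by (simp add: perm_apply_comp)
  also have "\<dots> = norm_S \<pi> x xt"
    unfolding norm_S_def
    by (rule sum.reindex_bij_witness[where i="\<lambda>\<tau>. inv \<sigma> \<circ> \<tau>" and j="\<lambda>\<tau>. \<sigma> \<circ> \<tau>"])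
       (auto simp: perms_def o_assoc permutes_inv_o[OF s'] permutes_compose permutes_inv s')
  finally show ?thesis .
qed


lemma ediv: "0 \<le> (a::real) \<Longrightarrow> ennreal (a / S) = ennreal a * ennreal (1 / S)"
  using ennreal_mult'[of a "1/S"] by simp

lemma alg: "0 \<le> a \<Longrightarrow> (p::ennreal) * (q * (ennreal (a / S) * l)) = (q * ennreal (1 / S)) * (p * ennreal a * l)"
  by (subst ediv) (simp_all add: mult_ac)

theorem mainTheorem3:
  fixes \<pi> :: "real^'n^'t::finite \<Rightarrow> real"
    and q' :: "real^'n \<Rightarrow> real^'n \<Rightarrow> real"
  assumes pi_meas: "\<pi> \<in> borel_measurable borel"
    and pi_nonneg: "\<And>x. \<pi> x \<ge> 0"
    and pi_prob: "(\<integral>\<^sup>+ x. ennreal (\<pi> x) \<partial>lborel) = 1"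
    and q_meas: "(\<lambda>(a, b). q' a b) \<in> borel_measurable borel"
    and q_nonneg: "\<And>a b. q' a b \<ge> 0"
    and q_prob: "\<And>b. (\<integral>\<^sup>+ a. ennreal (q' a b) \<partial>lborel) = 1"
    and q_sym: "\<And>a b. q' a b = q' b a"
  shows "(\<forall>f :: (real^'n^'t) \<times> (real^'n^'t) \<Rightarrow> ennreal. f \<in> borel_measurable borel \<longrightarrow>
            (\<integral>\<^sup>+ x. ennreal (\<pi> x) * kernel_op \<pi> q' x (\<lambda>y. f (x, y)) \<partial>lborel)
          = (\<integral>\<^sup>+ x. ennreal (\<pi> x) * kernel_op \<pi> q' x (\<lambda>y. f (y, x)) \<partial>lborel))
       \<and> (\<forall>g :: real^'n^'t \<Rightarrow> ennreal. g \<in> borel_measurable borel \<longrightarrow>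
            (\<integral>\<^sup>+ x. ennreal (\<pi> x) * kernel_op \<pi> q' x g \<partial>lborel)
          = (\<integral>\<^sup>+ x. ennreal (\<pi> x) * g x \<partial>lborel))"
proof -
  note [measurable] = pi_meas
  note qm[measurable] = prop_q_meas[OF q_meas]
  define M where "M = (lborel \<Otimes>\<^sub>M lborel :: ((real^'n^'t) \<times> (real^'n^'t)) measure)"
  define W where "W = (\<lambda>z::(real^'n^'t)\<times>(real^'n^'t). ennreal (prop_q q' (fst z) (snd z)) * ennreal (1 / norm_S \<pi> (fst z) (snd z)))"
  define A where "A = (\<lambda>(l::(real^'n^'t)\<times>(real^'n^'t) \<Rightarrow> ennreal) \<sigma> z. W z * (ennreal (\<pi> (fst z)) * ennreal (\<pi> (perm_apply \<sigma> (fst z))) * l (fst z, perm_apply \<sigma> (fst z))))"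
  define B where "B = (\<lambda>(l::(real^'n^'t)\<times>(real^'n^'t) \<Rightarrow> ennreal) \<sigma> z. W z * (ennreal (\<pi> (fst z)) * ennreal (\<pi> (perm_apply \<sigma> (snd z))) * l (fst z, perm_apply \<sigma> (snd z))))"
  have Wm[measurable]: "W \<in> borel_measurable M" unfolding W_def M_def by measurable
  have Am: "A l \<sigma> \<in> borel_measurable M" if [measurable]: "l \<in> borel_measurable (borel \<Otimes>\<^sub>M borel)" for l \<sigma>
    unfolding A_def M_def W_def by measurable
  have Bm: "B l \<sigma> \<in> borel_measurable M" if [measurable]: "l \<in> borel_measurable (borel \<Otimes>\<^sub>M borel)" for l \<sigma>
    unfolding B_def M_def W_def by measurable
  have W_perm: "W (perm_apply \<sigma> x, perm_apply \<sigma> xt) = W (x, xt)" if "\<sigma> \<in> perms" for \<sigma> x xt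
    using that unfolding W_def by (simp add: prop_q_perm norm_S_perm perms_def)
  have W_swap: "W (xt, x) = W (x, xt)" for x xt
    unfolding W_def by (simp add: prop_q_swap[OF q_sym] norm_S_swap)
  have E: "(\<integral>\<^sup>+ x. ennreal (\<pi> x) * kernel_op \<pi> q' x (\<lambda>y. l (x, y)) \<partial>lborel)
      = (\<Sum>\<sigma>\<in>perms. \<integral>\<^sup>+ z. A l \<sigma> z \<partial>M) + (\<Sum>\<sigma>\<in>perms. \<integral>\<^sup>+ z. B l \<sigma> z \<partial>M)"
    if lm[measurable]: "l \<in> borel_measurable (borel \<Otimes>\<^sub>M borel)" for l
  proof -
    define H where "H = (\<lambda>x xt. ennreal (prop_q q' x xt) *
        (\<Sum>\<sigma>\<in>perms. ennreal (\<pi> (perm_apply \<sigma> x) / norm_S \<pi> x xt) * l (x, perm_apply \<sigma> x)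
          + ennreal (\<pi> (perm_apply \<sigma> xt) / norm_S \<pi> x xt) * l (x, perm_apply \<sigma> xt)))"
    have Hm: "(\<lambda>z. H (fst z) (snd z)) \<in> borel_measurable (lborel \<Otimes>\<^sub>M lborel)"
      unfolding H_def by measurable
    have "(\<integral>\<^sup>+ x. ennreal (\<pi> x) * kernel_op \<pi> q' x (\<lambda>y. l (x, y)) \<partial>lborel)
        = (\<integral>\<^sup>+ x. ennreal (\<pi> x) * (\<integral>\<^sup>+ xt. H x xt \<partial>lborel) \<partial>lborel)"
      by (simp add: kernel_op_def H_def)
    also have "\<dots> = (\<integral>\<^sup>+ z. ennreal (\<pi> (fst z)) * H (fst z) (snd z) \<partial>M)"
      unfolding M_def by (rule iter_pair[OF pi_meas Hm])
    also have "\<dots> = (\<integral>\<^sup>+ z. (\<Sum>\<sigma>\<in>perms. A l \<sigma> z + B l \<sigma> z) \<partial>M)"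
    proof (rule nn_integral_cong)
      fix z :: "(real^'n^'t) \<times> (real^'n^'t)"
      obtain x xt where z: "z = (x, xt)" by (cases z)
      have "ennreal (\<pi> (fst z)) * H (fst z) (snd z) = (\<Sum>\<sigma>\<in>perms.
          ennreal (\<pi> x) * (ennreal (prop_q q' x xt) * (ennreal (\<pi> (perm_apply \<sigma> x) / norm_S \<pi> x xt) * l (x, perm_apply \<sigma> x)))
        + ennreal (\<pi> x) * (ennreal (prop_q q' x xt) * (ennreal (\<pi> (perm_apply \<sigma> xt) / norm_S \<pi> x xt) * l (x, perm_apply \<sigma> xt))))"
        unfolding z H_def fst_conv snd_conv by (simp only: sum_distrib_left distrib_left)
      also have "\<dots> = (\<Sum>\<sigma>\<in>perms. A l \<sigma> z + B l \<sigma> z)"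
        unfolding z A_def B_def W_def fst_conv snd_conv
        by (rule sum.cong[OF refl]) (simp only: alg[OF pi_nonneg])
      finally show "ennreal (\<pi> (fst z)) * H (fst z) (snd z) = (\<Sum>\<sigma>\<in>perms. A l \<sigma> z + B l \<sigma> z)" .
    qed
    also have "\<dots> = (\<Sum>\<sigma>\<in>perms. \<integral>\<^sup>+ z. A l \<sigma> z + B l \<sigma> z \<partial>M)"
      by (rule nn_integral_sum) (auto intro!: borel_measurable_add Am Bm)
    also have "\<dots> = (\<Sum>\<sigma>\<in>perms. (\<integral>\<^sup>+ z. A l \<sigma> z \<partial>M) + (\<integral>\<^sup>+ z. B l \<sigma> z \<partial>M))"
      by (rule sum.cong) (auto intro!: nn_integral_add Am Bm)
    finally show ?thesis by (simp add: sum.distrib)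
  qed
  have cA: "(\<integral>\<^sup>+ z. A l \<sigma> z \<partial>M) = (\<integral>\<^sup>+ z. A (\<lambda>p. l (snd p, fst p)) (inv \<sigma>) z \<partial>M)"
    if lm[measurable]: "l \<in> borel_measurable (borel \<Otimes>\<^sub>M borel)" and s: "\<sigma> \<in> perms" for l \<sigma>
  proof -
    have s': "\<sigma> permutes UNIV" using s by (simp add: perms_def)
    have lm': "(\<lambda>p. l (snd p, fst p)) \<in> borel_measurable (borel \<Otimes>\<^sub>M borel)" by measurable
    have "(\<integral>\<^sup>+ z. A (\<lambda>p. l (snd p, fst p)) (inv \<sigma>) z \<partial>M)
        = (\<integral>\<^sup>+ z. A (\<lambda>p. l (snd p, fst p)) (inv \<sigma>) (perm_apply \<sigma> (fst z), perm_apply \<sigma> (snd z)) \<partial>M)"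
      unfolding M_def by (rule pair_perm_inv[OF s' Am[OF lm', unfolded M_def], symmetric])
    also have "\<dots> = (\<integral>\<^sup>+ z. A l \<sigma> z \<partial>M)"
    proof (rule nn_integral_cong)
      fix z :: "(real^'n^'t) \<times> (real^'n^'t)"
      obtain x xt where z: "z = (x, xt)" by (cases z)
      have xx: "perm_apply (inv \<sigma>) (perm_apply \<sigma> x) = x"
        by (simp add: perm_apply_comp permutes_inv_o[OF s'] perm_apply_id)
      show "A (\<lambda>p. l (snd p, fst p)) (inv \<sigma>) (perm_apply \<sigma> (fst z), perm_apply \<sigma> (snd z)) = A l \<sigma> z"
        unfolding z A_def fst_conv snd_conv xx W_perm[OF s] by (simp only: mult_ac)
    qed
    finally show ?thesis by simp
  qed
  have cB: "(\<integral>\<^sup>+ z. B l \<sigma> z \<partial>M) = (\<integral>\<^sup>+ z. B (\<lambda>p. l (snd p, fst p)) (inv \<sigma>) z \<partial>M)"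
    if lm[measurable]: "l \<in> borel_measurable (borel \<Otimes>\<^sub>M borel)" and s: "\<sigma> \<in> perms" for l \<sigma>
  proof -
    have s': "\<sigma> permutes UNIV" using s by (simp add: perms_def)
    have lm': "(\<lambda>p. l (snd p, fst p)) \<in> borel_measurable (borel \<Otimes>\<^sub>M borel)" by measurable
    have Bm': "B (\<lambda>p. l (snd p, fst p)) (inv \<sigma>) \<in> borel_measurable M" by (rule Bm[OF lm'])
    have Bm'': "(\<lambda>w. B (\<lambda>p. l (snd p, fst p)) (inv \<sigma>) (perm_apply \<sigma> (fst w), perm_apply \<sigma> (snd w))) \<in> borel_measurable M"
      using Bm' unfolding M_def by measurable
    have "(\<integral>\<^sup>+ z. B (\<lambda>p. l (snd p, fst p)) (inv \<sigma>) z \<partial>M)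
        = (\<integral>\<^sup>+ z. B (\<lambda>p. l (snd p, fst p)) (inv \<sigma>) (perm_apply \<sigma> (fst z), perm_apply \<sigma> (snd z)) \<partial>M)"
      unfolding M_def by (rule pair_perm_inv[OF s' Bm'[unfolded M_def], symmetric])
    also have "\<dots> = (\<integral>\<^sup>+ z. B (\<lambda>p. l (snd p, fst p)) (inv \<sigma>) (perm_apply \<sigma> (snd z), perm_apply \<sigma> (fst z)) \<partial>M)"
      unfolding M_def using pair_swap_inv[OF Bm''[unfolded M_def]] by simp
    also have "\<dots> = (\<integral>\<^sup>+ z. B l \<sigma> z \<partial>M)"
    proof (rule nn_integral_cong)
      fix z :: "(real^'n^'t) \<times> (real^'n^'t)"
      obtain x xt where z: "z = (x, xt)" by (cases z)
      have xx: "perm_apply (inv \<sigma>) (perm_apply \<sigma> x) = x"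
        by (simp add: perm_apply_comp permutes_inv_o[OF s'] perm_apply_id)
      show "B (\<lambda>p. l (snd p, fst p)) (inv \<sigma>) (perm_apply \<sigma> (snd z), perm_apply \<sigma> (fst z)) = B l \<sigma> z"
        unfolding z B_def fst_conv snd_conv xx W_perm[OF s] W_swap by (simp only: mult_ac)
    qed
    finally show ?thesis by simp
  qed
  have part1: "(\<integral>\<^sup>+ x. ennreal (\<pi> x) * kernel_op \<pi> q' x (\<lambda>y. f (x, y)) \<partial>lborel)
          = (\<integral>\<^sup>+ x. ennreal (\<pi> x) * kernel_op \<pi> q' x (\<lambda>y. f (y, x)) \<partial>lborel)"
    if fm: "f \<in> borel_measurable borel" for f
  proof -
    have fm'[measurable]: "f \<in> borel_measurable (borel \<Otimes>\<^sub>M borel)" using fm by (simp add: borel_prod)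
    have fm'': "(\<lambda>p. f (snd p, fst p)) \<in> borel_measurable (borel \<Otimes>\<^sub>M borel)" by measurable
    have "(\<integral>\<^sup>+ x. ennreal (\<pi> x) * kernel_op \<pi> q' x (\<lambda>y. f (x, y)) \<partial>lborel)
        = (\<Sum>\<sigma>\<in>perms. \<integral>\<^sup>+ z. A f \<sigma> z \<partial>M) + (\<Sum>\<sigma>\<in>perms. \<integral>\<^sup>+ z. B f \<sigma> z \<partial>M)"
      by (rule E[OF fm'])
    also have "\<dots> = (\<Sum>\<sigma>\<in>perms. \<integral>\<^sup>+ z. A (\<lambda>p. f (snd p, fst p)) (inv \<sigma>) z \<partial>M)
                  + (\<Sum>\<sigma>\<in>perms. \<integral>\<^sup>+ z. B (\<lambda>p. f (snd p, fst p)) (inv \<sigma>) z \<partial>M)"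
    proof (rule arg_cong2[where f="(+)"])
      show "(\<Sum>\<sigma>\<in>perms. \<integral>\<^sup>+ z. A f \<sigma> z \<partial>M) = (\<Sum>\<sigma>\<in>perms. \<integral>\<^sup>+ z. A (\<lambda>p. f (snd p, fst p)) (inv \<sigma>) z \<partial>M)"
        by (rule sum.cong[OF refl]) (erule cA[OF fm'])
      show "(\<Sum>\<sigma>\<in>perms. \<integral>\<^sup>+ z. B f \<sigma> z \<partial>M) = (\<Sum>\<sigma>\<in>perms. \<integral>\<^sup>+ z. B (\<lambda>p. f (snd p, fst p)) (inv \<sigma>) z \<partial>M)"
        by (rule sum.cong[OF refl]) (erule cB[OF fm'])
    qed
    also have "\<dots> = (\<Sum>\<sigma>\<in>perms. \<integral>\<^sup>+ z. A (\<lambda>p. f (snd p, fst p)) \<sigma> z \<partial>M)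
                  + (\<Sum>\<sigma>\<in>perms. \<integral>\<^sup>+ z. B (\<lambda>p. f (snd p, fst p)) \<sigma> z \<partial>M)"
      using perms_inv_sum[of "\<lambda>\<sigma>. \<integral>\<^sup>+ z. A (\<lambda>p. f (snd p, fst p)) \<sigma> z \<partial>M"]
        perms_inv_sum[of "\<lambda>\<sigma>. \<integral>\<^sup>+ z. B (\<lambda>p. f (snd p, fst p)) \<sigma> z \<partial>M"] by (simp only:)
    also have "\<dots> = (\<integral>\<^sup>+ x. ennreal (\<pi> x) * kernel_op \<pi> q' x (\<lambda>y. f (y, x)) \<partial>lborel)"
      using E[OF fm''] by (simp only: fst_conv snd_conv)
    finally show ?thesis .
  qed
  have Q1: "(\<integral>\<^sup>+ xt. ennreal (prop_q q' x xt) \<partial>lborel) = 1" for x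
  proof -
    have qm1: "(\<lambda>y. ennreal (q' y b)) \<in> borel_measurable borel" for b
    proof -
      have "(\<lambda>y::real^'n. (y, b)) \<in> measurable borel borel" unfolding borel_prod[symmetric] by measurable
      from measurable_compose[OF this q_meas] show ?thesis by simp
    qed
    have "(\<integral>\<^sup>+ xt. ennreal (prop_q q' x xt) \<partial>lborel) = (\<integral>\<^sup>+ xt. (\<Prod>j\<in>UNIV. ennreal (q' (xt $ j) (x $ j))) \<partial>lborel)"
      by (simp add: prop_q_def prod_ennreal q_nonneg)
    also have "\<dots> = (\<Prod>j\<in>UNIV. \<integral>\<^sup>+ y. ennreal (q' y (x $ j)) \<partial>lborel)"
      using nn_integral_vec_prod[of "\<lambda>j y. ennreal (q' y (x $ j))"] qm1 by simp
    also have "\<dots> = 1" by (simp add: q_prob)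
    finally show ?thesis .
  qed
  have K1: "kernel_op \<pi> q' x (\<lambda>_. c) = c" if px: "0 < \<pi> x" for x c
  proof -
    have idp: "id \<in> perms" by (simp add: perms_def permutes_id)
    have S: "0 < norm_S \<pi> x xt" for xt
    proof -
      have "\<pi> (perm_apply id x) + \<pi> (perm_apply id xt) \<le> norm_S \<pi> x xt"
        unfolding norm_S_def
        by (rule member_le_sum[OF idp]) (auto intro: add_nonneg_nonneg pi_nonneg simp: perms_def)
      then show ?thesis using px pi_nonneg[of xt] by (simp add: perm_apply_id)
    qed
    have I: "ennreal (prop_q q' x xt) * (\<Sum>\<sigma>\<in>perms. ennreal (\<pi> (perm_apply \<sigma> x) / norm_S \<pi> x xt) * c
            + ennreal (\<pi> (perm_apply \<sigma> xt) / norm_S \<pi> x xt) * c) = ennreal (prop_q q' x xt) * c" for xt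
    proof -
      let ?S = "norm_S \<pi> x xt"
      have "(\<Sum>\<sigma>\<in>perms. ennreal (\<pi> (perm_apply \<sigma> x) / ?S) * c + ennreal (\<pi> (perm_apply \<sigma> xt) / ?S) * c)
          = (\<Sum>\<sigma>\<in>perms. ennreal (\<pi> (perm_apply \<sigma> x) / ?S + \<pi> (perm_apply \<sigma> xt) / ?S)) * c"
        using S[of xt] by (simp add: sum_distrib_right distrib_right ennreal_plus pi_nonneg)
      also have "\<dots> = ennreal (\<Sum>\<sigma>\<in>perms. \<pi> (perm_apply \<sigma> x) / ?S + \<pi> (perm_apply \<sigma> xt) / ?S) * c"
        using S[of xt] by (subst sum_ennreal) (auto intro!: add_nonneg_nonneg simp: pi_nonneg)
      also have "(\<Sum>\<sigma>\<in>perms. \<pi> (perm_apply \<sigma> x) / ?S + \<pi> (perm_apply \<sigma> xt) / ?S) = ?S / ?S"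
        unfolding norm_S_def by (simp add: add_divide_distrib[symmetric] sum_divide_distrib[symmetric])
      also have "?S / ?S = 1" using S[of xt] by simp
      finally show ?thesis by simp
    qed
    have "kernel_op \<pi> q' x (\<lambda>_. c) = (\<integral>\<^sup>+ xt. ennreal (prop_q q' x xt) * c \<partial>lborel)"
      unfolding kernel_op_def using I by simp
    also have "\<dots> = (\<integral>\<^sup>+ xt. ennreal (prop_q q' x xt) \<partial>lborel) * c"
      by (rule nn_integral_multc) measurable
    also have "\<dots> = c" by (simp add: Q1)
    finally show ?thesis .
  qed
  show ?thesis
  proof (intro conjI allI impI)
    fix f :: "(real^'n^'t) \<times> (real^'n^'t) \<Rightarrow> ennreal"
    assume "f \<in> borel_measurable borel"
    then show "(\<integral>\<^sup>+ x. ennreal (\<pi> x) * kernel_op \<pi> q' x (\<lambda>y. f (x, y)) \<partial>lborel)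
          = (\<integral>\<^sup>+ x. ennreal (\<pi> x) * kernel_op \<pi> q' x (\<lambda>y. f (y, x)) \<partial>lborel)"
      by (rule part1)
  next
    fix g :: "real^'n^'t \<Rightarrow> ennreal"
    assume gm[measurable]: "g \<in> borel_measurable borel"
    have fm: "(\<lambda>p::(real^'n^'t) \<times> (real^'n^'t). g (snd p)) \<in> borel_measurable borel"
      unfolding borel_prod[symmetric] by measurable
    have "(\<integral>\<^sup>+ x. ennreal (\<pi> x) * kernel_op \<pi> q' x g \<partial>lborel)
        = (\<integral>\<^sup>+ x. ennreal (\<pi> x) * kernel_op \<pi> q' x (\<lambda>y. g x) \<partial>lborel)"
      using part1[OF fm] by simp
    also have "\<dots> = (\<integral>\<^sup>+ x. ennreal (\<pi> x) * g x \<partial>lborel)"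
    proof (rule nn_integral_cong)
      fix x
      show "ennreal (\<pi> x) * kernel_op \<pi> q' x (\<lambda>y. g x) = ennreal (\<pi> x) * g x"
      proof (cases "\<pi> x = 0")
        case True then show ?thesis by simp
      next
        case False then have "0 < \<pi> x" using pi_nonneg[of x] by simp
        then show ?thesis by (simp add: K1)
      qed
    qed
    finally show "(\<integral>\<^sup>+ x. ennreal (\<pi> x) * kernel_op \<pi> q' x g \<partial>lborel) = (\<integral>\<^sup>+ x. ennreal (\<pi> x) * g x \<partial>lborel)" .
  qed
qed

end
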